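(* Fix an integer $k\ge -1$. For every $g\ge 4k+3$, \[\#\{S\in\mathcal{S}_g\mid m(S)=g-k\}=\sum_{\overline{x}\in\mathcal{Y}(k)}\binom{g-3k-2}{k+1-a(\overline{x})-2b(\overline{x})}.\]
   Context: A numerical semigroup $S$ is a submonoid of $\mathbb{N}_0$ with finite complement; its genus is the size of the complement and $m(S)$ is its smallest nonzero element. $\mathcal{S}_g$ is the set of numerical semigroups of genus $g$. For $\overline{x}=(x_1,\ldots,x_t)\in\{1,2,3\}^t$ let $a(\overline{x})=\#\{i: x_i=2\}$ and $b(\overline{x})=\#\{i: x_i=3\}$. For an integer $k\ge 0$, $\mathcal{Y}(k)$ is the set of tuples $\overline{x}=(x_1,\ldots,x_{2k+1})\in\{1,2,3\}^{2k+1}$ such that (i) whenever $i_1,i_2,i_3\in[1,2k+1]$ satisfy $i_1+i_2=i_3$, $(x_{i_1},x_{i_2},x_{i_3})\ne(1,1,3)$, and (ii) $a(\overline{x})+2b(\overline{x})\le k+1$; and $\mathcal{Y}(-1)=\{\emptyset\}$ consists of the empty tuple (with $a=b=0$). *)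

theory Defs
  imports Main
begin

definition numerical_semigroup :: "nat set \<Rightarrow> bool" where
  "numerical_semigroup S \<longleftrightarrow>
     0 \<in> S \<and> (\<forall>x\<in>S. \<forall>y\<in>S. x + y \<in> S) \<and> finite (UNIV - S)"

definition genus :: "nat set \<Rightarrow> nat" where
  "genus S = card (UNIV - S)"

definition multiplicity_ns :: "nat set \<Rightarrow> nat" where
  "multiplicity_ns S = (LEAST x. x \<in> S \<and> x \<noteq> 0)"

definition semigroups_of_genus :: "nat \<Rightarrow> nat set set" where
  "semigroups_of_genus g = {S. numerical_semigroup S \<and> genus S = g}"

text \<open>Tuples are lists; the paper's entry x_i (1-based) is xs ! (i - 1).\<close>
definition a_cnt :: "nat list \<Rightarrow> nat" where
  "a_cnt xs = length (filter (\<lambda>x. x = 2) xs)"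

definition b_cnt :: "nat list \<Rightarrow> nat" where
  "b_cnt xs = length (filter (\<lambda>x. x = 3) xs)"

definition Y_set :: "int \<Rightarrow> nat list set" where
  "Y_set k = (if k = -1 then {[]} else
     {xs. int (length xs) = 2 * k + 1 \<and> set xs \<subseteq> {1, 2, 3} \<and>
          (\<forall>i1\<in>{1..length xs}. \<forall>i2\<in>{1..length xs}. \<forall>i3\<in>{1..length xs}.
             i1 + i2 = i3 \<longrightarrow> (xs ! (i1 - 1), xs ! (i2 - 1), xs ! (i3 - 1)) \<noteq> (1, 1, 3)) \<and>
          int (a_cnt xs + 2 * b_cnt xs) \<le> k + 1})"

end

theory Submission
  imports Defs
begin


definition sg :: "nat \<Rightarrow> (nat \<Rightarrow> nat) \<Rightarrow> nat set" where
  "sg m c = {n. n mod m = 0 \<or> c (n mod m) \<le> n div m}"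

definition kunzC :: "nat \<Rightarrow> nat \<Rightarrow> (nat \<Rightarrow> nat) set" where
  "kunzC m g = {c. (\<forall>i. (i = 0 \<or> m \<le> i) \<longrightarrow> c i = 0) \<and> (\<forall>i. 1 \<le> i \<and> i < m \<longrightarrow> 1 \<le> c i)
     \<and> (\<forall>i j. 1 \<le> i \<longrightarrow> 1 \<le> j \<longrightarrow> i + j < m \<longrightarrow> c (i+j) \<le> c i + c j)
     \<and> (\<forall>i j. i < m \<longrightarrow> j < m \<longrightarrow> m < i + j \<longrightarrow> c (i+j-m) \<le> c i + c j + 1)
     \<and> (\<Sum>i\<in>{1..<m}. c i) = g}"

lemma qmod: "i < m \<Longrightarrow> (q*m+i) mod m = (i::nat)" by simp
lemma qdiv: "i < m \<Longrightarrow> (q*m+i) div m = (q::nat)" by simp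

lemma kunzC_zero: "c \<in> kunzC m g \<Longrightarrow> i = 0 \<or> m \<le> i \<Longrightarrow> c i = 0"
  unfolding kunzC_def by (simp only: mem_Collect_eq)

lemma sg_compl:
  assumes "m > 0"
  shows "UNIV - sg m c = (\<lambda>(i,q). q*m+i) ` (SIGMA i:{1..<m}. {..<c i})"
proof (intro set_eqI iffI)
  fix n assume "n \<in> UNIV - sg m c"
  then have "n mod m \<noteq> 0" "n div m < c (n mod m)" by (auto simp: sg_def)
  moreover have "n mod m < m" using assms by simp
  ultimately have mem: "(n mod m, n div m) \<in> (SIGMA i:{1..<m}. {..<c i})" by auto
  have "n = (\<lambda>(i,q). q*m+i) (n mod m, n div m)" by simp
  then show "n \<in> (\<lambda>(i,q). q*m+i) ` (SIGMA i:{1..<m}. {..<c i})"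
    using mem by (rule image_eqI)
next
  fix n assume "n \<in> (\<lambda>(i,q). q*m+i) ` (SIGMA i:{1..<m}. {..<c i})"
  then obtain i q where "n = q*m+i" "1 \<le> i" "i < m" "q < c i" by auto
  then have "n mod m = i" "n div m = q" using qmod qdiv by auto
  then show "n \<in> UNIV - sg m c" using \<open>1 \<le> i\<close> \<open>q < c i\<close> by (simp add: sg_def)
qed

lemma sg_card_compl:
  assumes "m > 0"
  shows "finite (UNIV - sg m c)" "card (UNIV - sg m c) = (\<Sum>i\<in>{1..<m}. c i)"
proof -
  have inj: "inj_on (\<lambda>(i,q). q*m+i) (SIGMA i:{1..<m}. {..<c i})"
  proof (rule inj_onI, clarsimp)
    fix i q i' q' assume "q * m + i = q' * m + i'" "i < m" "i' < m"
    then have "(q * m + i) mod m = (q' * m + i') mod m" "(q * m + i) div m = (q' * m + i') div m" by simp_all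
    then show "i = i' \<and> q = q'" unfolding qmod[OF \<open>i < m\<close>] qmod[OF \<open>i' < m\<close>]
       qdiv[OF \<open>i < m\<close>] qdiv[OF \<open>i' < m\<close>] by simp
  qed
  show "finite (UNIV - sg m c)" unfolding sg_compl[OF assms] by auto
  show "card (UNIV - sg m c) = (\<Sum>i\<in>{1..<m}. c i)"
    unfolding sg_compl[OF assms] card_image[OF inj] by simp
qed

lemma sg_good:
  assumes "m > 0" "c \<in> kunzC m g"
  shows "sg m c \<in> semigroups_of_genus g" "multiplicity_ns (sg m c) = m"
proof -
  have z: "\<forall>i. (i = 0 \<or> m \<le> i) \<longrightarrow> c i = 0" and one: "\<forall>i. 1 \<le> i \<and> i < m \<longrightarrow> 1 \<le> c i"
    and k1: "\<forall>i j. 1 \<le> i \<longrightarrow> 1 \<le> j \<longrightarrow> i + j < m \<longrightarrow> c (i+j) \<le> c i + c j"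
    and k2: "\<forall>i j. i < m \<longrightarrow> j < m \<longrightarrow> m < i + j \<longrightarrow> c (i+j-m) \<le> c i + c j + 1"
    and s: "(\<Sum>i\<in>{1..<m}. c i) = g" using assms(2) unfolding kunzC_def by auto
  have closed: "x + y \<in> sg m c" if "x \<in> sg m c" "y \<in> sg m c" for x y
  proof -
    define i where "i = x mod m"
    define j where "j = y mod m"
    define q where "q = x div m"
    define r where "r = y div m"
    have x: "x = q*m+i" and y: "y = r*m+j" unfolding i_def j_def q_def r_def by auto
    have im: "i < m" "j < m" unfolding i_def j_def using assms(1) by auto
    have hx: "i = 0 \<or> c i \<le> q" and hy: "j = 0 \<or> c j \<le> r"
      using that unfolding sg_def i_def j_def q_def r_def by auto
    have xy: "x + y = (q + r) * m + (i + j)" using x y by (simp add: algebra_simps)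
    show ?thesis
    proof (cases "i = 0 \<or> j = 0")
      case True
      then show ?thesis using hx hy im xy by (auto simp: sg_def)
    next
      case False
      then have ci: "c i \<le> q" "c j \<le> r" "1 \<le> i" "1 \<le> j" using hx hy by auto
      consider "i + j < m" | "i + j = m" | "m < i + j" by linarith
      then show ?thesis
      proof cases
        case 1
        then have "c (i+j) \<le> q + r" using k1 ci by (meson add_mono order_trans)
        then show ?thesis using xy 1 by (simp add: sg_def)
      next
        case 2
        then show ?thesis using xy by (simp add: sg_def)
      next
        case 3
        have e: "x + y = (q + r + 1) * m + (i + j - m)" using xy 3 by (simp add: algebra_simps)
        have l: "i + j - m < m" using im by linarith
        have "c (i+j-m) \<le> q + r + 1" using k2 ci im 3 by (meson add_mono order_trans add_right_mono)
        have "(x + y) mod m = i + j - m" "(x + y) div m = q + r + 1"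
          unfolding e using l assms(1) by (simp only: mod_mult_self3 mod_less[OF l],
             simp only: div_mult_self3[of m] div_less[OF l] add_0_right)
        then show ?thesis using \<open>c (i+j-m) \<le> q + r + 1\<close> by (simp add: sg_def)
      qed
    qed
  qed
  have ns: "numerical_semigroup (sg m c)"
    unfolding numerical_semigroup_def using closed sg_card_compl(1)[OF assms(1)]
    by (auto simp: sg_def)
  then show "sg m c \<in> semigroups_of_genus g"
    unfolding semigroups_of_genus_def genus_def using sg_card_compl(2)[OF assms(1)] s by auto
  show "multiplicity_ns (sg m c) = m"
    unfolding multiplicity_ns_def
  proof (rule Least_equality)
    show "m \<in> sg m c \<and> m \<noteq> 0" using assms(1) by (simp add: sg_def)
  next
    fix y assume "y \<in> sg m c \<and> y \<noteq> 0"
    show "m \<le> y"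
    proof (rule ccontr)
      assume "\<not> m \<le> y"
      then have "y mod m = y" "y div m = 0" "1 \<le> c y" using one \<open>y \<in> sg m c \<and> y \<noteq> 0\<close> by auto
      then show False using \<open>y \<in> sg m c \<and> y \<noteq> 0\<close> by (auto simp: sg_def)
    qed
  qed
qed

lemma sg_inj:
  assumes "m > 0"
  shows "inj_on (sg m) (kunzC m g)"
proof (rule inj_onI)
  fix c d assume c: "c \<in> kunzC m g" and d: "d \<in> kunzC m g" and e: "sg m c = sg m d"
  have le: "c i \<le> d i" if "sg m c = sg m d" "1 \<le> i" "i < m" for c d :: "nat \<Rightarrow> nat" and i
  proof -
    have "d i * m + i \<in> sg m d" using that by (simp add: sg_def)
    then have "d i * m + i \<in> sg m c" using that by simp
    then show ?thesis using that by (simp add: sg_def)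
  qed
  show "c = d"
  proof
    fix i
    show "c i = d i"
    proof (cases "1 \<le> i \<and> i < m")
      case True
      then show ?thesis using le[OF e] le[OF e[symmetric]] by (meson antisym)
    next
      case False
      then have "i = 0 \<or> m \<le> i" by auto
      then show ?thesis using kunzC_zero[OF c] kunzC_zero[OF d] by simp
    qed
  qed
qed

lemma sg_surj:
  assumes "S \<in> semigroups_of_genus g" "multiplicity_ns S = m"
  shows "m > 0" "\<exists>c\<in>kunzC m g. S = sg m c"
proof -
  have z: "0 \<in> S" and cl: "\<And>x y. x \<in> S \<Longrightarrow> y \<in> S \<Longrightarrow> x + y \<in> S"
    and fin: "finite (UNIV - S)" and gen: "card (UNIV - S) = g"
    using assms(1) unfolding semigroups_of_genus_def numerical_semigroup_def genus_def by auto
  obtain B where B0: "\<forall>n\<in>UNIV - S. n \<le> B"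
    using fin unfolding finite_nat_set_iff_bounded_le by (elim exE) 
  have B: "n \<le> B" if "n \<notin> S" for n using B0 that by simp
  have big: "n \<in> S" if "B < n" for n using B[of n] that by linarith
  have ex: "\<exists>x. x \<in> S \<and> x \<noteq> 0" using big[of "Suc B"] by (intro exI[of _ "Suc B"]) simp
  have mS: "m \<in> S \<and> m \<noteq> 0" using LeastI_ex[OF ex] assms(2) unfolding multiplicity_ns_def by simp
  then show mpos: "m > 0" by simp
  have below: "n \<notin> S" if "0 < n" "n < m" for n
    using not_less_Least[of n "\<lambda>x. x \<in> S \<and> x \<noteq> 0"] that assms(2)
    unfolding multiplicity_ns_def by auto
  have mult: "q * m \<in> S" for q
  proof (induction q)
    case 0 then show ?case using z by simp
  next
    case (Suc q) then show ?case using cl[OF mS[THEN conjunct1] Suc] by (simp add: add.commute)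
  qed
  define c where "c i = (if 1 \<le> i \<and> i < m then (LEAST q. q*m+i \<in> S) else 0)" for i
  have exq: "\<exists>q. q*m+i \<in> S" for i
  proof -
    have "Suc B * 1 \<le> Suc B * m" using mpos by (intro mult_le_mono2) simp
    then have "B < Suc B * m + i" by simp
    then have "Suc B * m + i \<in> S" by (rule big)
    then show ?thesis by (rule exI)
  qed
  have cS: "c i * m + i \<in> S" if "1 \<le> i" "i < m" for i
    using LeastI_ex[OF exq[of i]] that unfolding c_def by simp
  have cle: "c i \<le> q" if "1 \<le> i" "i < m" "q * m + i \<in> S" for i q
    using Least_le[of "\<lambda>q. q*m+i \<in> S" q] that unfolding c_def by simp
  have eq: "S = sg m c"
  proof (intro set_eqI iffI)
    fix n assume n: "n \<in> S"
    define i where "i = n mod m"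
    define q where "q = n div m"
    have nq: "n = q*m+i" "i < m" unfolding i_def q_def using mpos by auto
    show "n \<in> sg m c"
    proof (cases "i = 0")
      case True then show ?thesis unfolding sg_def i_def by simp
    next
      case False
      then have "c i \<le> q" using cle[of i q] nq n by simp
      then show ?thesis unfolding sg_def i_def q_def by simp
    qed
  next
    fix n assume n: "n \<in> sg m c"
    define i where "i = n mod m"
    define q where "q = n div m"
    have nq: "n = q*m+i" "i < m" unfolding i_def q_def using mpos by auto
    show "n \<in> S"
    proof (cases "i = 0")
      case True then show ?thesis using nq mult by simp
    next
      case False
      then have le: "c i \<le> q" using n unfolding sg_def i_def q_def by simp
      have e: "n = (c i * m + i) + (q - c i) * m" using nq le by (simp add: algebra_simps)
      have "1 \<le> i" using False by simp
      from cl[OF cS[OF this nq(2)] mult[of "q - c i"]] show ?thesis unfolding e .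
    qed
  qed
  have "c \<in> kunzC m g"
    unfolding kunzC_def
  proof (intro CollectI conjI allI impI)
    fix i assume "i = 0 \<or> m \<le> i" then show "c i = 0" unfolding c_def by auto
  next
    fix i assume i: "1 \<le> i \<and> i < m"
    show "1 \<le> c i"
    proof (rule ccontr)
      assume "\<not> 1 \<le> c i"
      then have "c i = 0" by simp
      then have "i \<in> S" using cS[of i] i by simp
      then show False using below[of i] i by simp
    qed
  next
    fix i j :: nat assume h: "1 \<le> i" "1 \<le> j" "i + j < m"
    have e: "(c i * m + i) + (c j * m + j) = (c i + c j) * m + (i + j)" by (simp add: algebra_simps)
    have "(c i * m + i) + (c j * m + j) \<in> S" using cl[OF cS[of i] cS[of j]] h by simp
    then have "(c i + c j) * m + (i + j) \<in> S" unfolding e .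
    then show "c (i+j) \<le> c i + c j" using cle h by simp
  next
    fix i j :: nat assume h: "i < m" "j < m" "m < i + j"
    then have h1: "1 \<le> i" "1 \<le> j" by auto
    have e: "(c i * m + i) + (c j * m + j) = (c i + c j + 1) * m + (i + j - m)"
      using h by (simp add: algebra_simps)
    have "(c i * m + i) + (c j * m + j) \<in> S" using cl[OF cS[of i] cS[of j]] h h1 by simp
    then have "(c i + c j + 1) * m + (i + j - m) \<in> S" unfolding e .
    then show "c (i+j-m) \<le> c i + c j + 1" using cle h by simp
  next
    show "(\<Sum>i\<in>{1..<m}. c i) = g" using gen sg_card_compl(2)[OF mpos, of c] eq by simp
  qed
  then show "\<exists>c\<in>kunzC m g. S = sg m c" using eq by (intro bexI)
qed

lemma card_part1:
  assumes "m > 0"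
  shows "card {S \<in> semigroups_of_genus g. multiplicity_ns S = m} = card (kunzC m g)"
proof -
  have "bij_betw (sg m) (kunzC m g) {S \<in> semigroups_of_genus g. multiplicity_ns S = m}"
    unfolding bij_betw_def
  proof
    show "inj_on (sg m) (kunzC m g)" by (rule sg_inj[OF assms])
    show "sg m ` kunzC m g = {S \<in> semigroups_of_genus g. multiplicity_ns S = m}"
    proof (intro set_eqI iffI)
      fix S assume "S \<in> sg m ` kunzC m g"
      then show "S \<in> {S \<in> semigroups_of_genus g. multiplicity_ns S = m}"
        using sg_good[OF assms] by auto
    next
      fix S assume "S \<in> {S \<in> semigroups_of_genus g. multiplicity_ns S = m}"
      then obtain c where "c \<in> kunzC m g" "S = sg m c" using sg_surj(2)[of S g m] by auto
      then show "S \<in> sg m ` kunzC m g" by blast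
    qed
  qed
  then show ?thesis by (simp add: bij_betw_same_card)
qed



lemma kunzC_D:
  assumes "c \<in> kunzC m g"
  shows "\<And>i. i = 0 \<or> m \<le> i \<Longrightarrow> c i = 0"
    and "\<And>i. 1 \<le> i \<Longrightarrow> i < m \<Longrightarrow> 1 \<le> c i"
    and "\<And>i j. 1 \<le> i \<Longrightarrow> 1 \<le> j \<Longrightarrow> i + j < m \<Longrightarrow> c (i+j) \<le> c i + c j"
    and "\<And>i j. i < m \<Longrightarrow> j < m \<Longrightarrow> m < i + j \<Longrightarrow> c (i+j-m) \<le> c i + c j + 1"
    and "(\<Sum>i\<in>{1..<m}. c i) = g"
  using assms unfolding kunzC_def by (simp_all only: mem_Collect_eq)

lemma sum_swap_lower: "(\<Sum>j\<in>{1..<l::nat}. c (l - j)) = (\<Sum>j\<in>{1..<l}. (c j :: nat))"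
  by (rule sum.reindex_bij_witness[of _ "\<lambda>j. l - j" "\<lambda>j. l - j"]) auto

lemma sum_swap_upper: "(\<Sum>j\<in>{Suc l..<m}. c (m + l - j)) = (\<Sum>j\<in>{Suc l..<m}. (c j :: nat))"
  by (rule sum.reindex_bij_witness[of _ "\<lambda>j. m + l - j" "\<lambda>j. m + l - j"]) auto

lemma card_le_sum: "(\<And>i. i \<in> A \<Longrightarrow> 1 \<le> c i) \<Longrightarrow> card A \<le> (\<Sum>i\<in>A. (c i :: nat))"
  by (metis card_eq_sum sum_mono)

lemma sum_split3:
  assumes "1 \<le> l" "l < (m::nat)"
  shows "(\<Sum>i\<in>{1..<m}. c i) = (\<Sum>i\<in>{1..<l}. c i) + c l + (\<Sum>i\<in>{Suc l..<m}. (c i :: nat))"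
proof -
  have "(\<Sum>i\<in>{1..<m}. c i) = (\<Sum>i\<in>{1..<l}. c i) + (\<Sum>i\<in>{l..<m}. c i)"
    using assms by (intro sum.atLeastLessThan_concat[symmetric]) auto
  also have "(\<Sum>i\<in>{l..<m}. c i) = c l + (\<Sum>i\<in>{Suc l..<m}. c i)"
    using assms by (intro sum.atLeast_Suc_lessThan) auto
  finally show ?thesis by simp
qed

lemma pair_bound_lower:
  assumes "\<And>j. j \<in> {1..<l} \<Longrightarrow> t \<le> c j + c (l - j)"
  shows "t * (l - 1) \<le> (2::nat) * (\<Sum>j\<in>{1..<l}. (c j :: nat))"
proof -
  have "t * (l - 1) = (\<Sum>j\<in>{1..<l}. t)" by simp
  also have "\<dots> \<le> (\<Sum>j\<in>{1..<l}. c j + c (l - j))" using assms by (intro sum_mono) auto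
  also have "\<dots> = 2 * (\<Sum>j\<in>{1..<l}. c j)" using sum_swap_lower[of c l] by (simp add: sum.distrib)
  finally show ?thesis .
qed

lemma pair_bound_upper:
  assumes "\<And>j. j \<in> {Suc l..<m} \<Longrightarrow> t \<le> c j + c (m + l - j)"
  shows "t * (m - Suc l) \<le> 2 * (\<Sum>j\<in>{Suc l..<m}. (c j :: nat))"
proof -
  have "t * (m - Suc l) = (\<Sum>j\<in>{Suc l..<m}. t)" by simp
  also have "\<dots> \<le> (\<Sum>j\<in>{Suc l..<m}. c j + c (m + l - j))" using assms by (intro sum_mono) auto
  also have "\<dots> = 2 * (\<Sum>j\<in>{Suc l..<m}. c j)" using sum_swap_upper[of c m l] by (simp add: sum.distrib)
  finally show ?thesis .
qed

lemma bound2: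
  assumes c: "c \<in> kunzC m g" and gm: "g + 1 = m + K"
    and l: "2 * K \<le> l" "1 \<le> l" "l < m"
  shows "c l \<le> 2"
proof (rule ccontr)
  assume "\<not> c l \<le> 2"
  then have cl: "3 \<le> c l" by simp
  have "3 * (l - 1) \<le> 2 * (\<Sum>j\<in>{1..<l}. c j)"
  proof (rule pair_bound_lower)
    fix j assume j: "j \<in> {1..<l}"
    then have "1 \<le> j" "1 \<le> l - j" "j + (l - j) < m" using l by auto
    then have "c (j + (l - j)) \<le> c j + c (l - j)" by (rule kunzC_D(3)[OF c])
    moreover have "j + (l - j) = l" using j by auto
    ultimately show "3 \<le> c j + c (l - j)" using cl by simp
  qed
  moreover have "card {Suc l..<m} \<le> (\<Sum>j\<in>{Suc l..<m}. c j)"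
    by (rule card_le_sum) (use kunzC_D(2)[OF c] in auto)
  moreover have "(\<Sum>i\<in>{1..<m}. c i) = (\<Sum>i\<in>{1..<l}. c i) + c l + (\<Sum>i\<in>{Suc l..<m}. c i)"
    by (rule sum_split3[OF l(2,3)])
  moreover have "(\<Sum>i\<in>{1..<m}. c i) = g" by (rule kunzC_D(5)[OF c])
  ultimately show False using cl gm l by simp
qed

lemma bound3:
  assumes c: "c \<in> kunzC m g" and gm: "g + 1 = m + K" and mK: "3 * K \<le> m"
    and l: "1 \<le> l" "l < m"
  shows "c l \<le> 3"
proof (rule ccontr)
  assume "\<not> c l \<le> 3"
  then have cl: "4 \<le> c l" by simp
  have "4 * (l - 1) \<le> 2 * (\<Sum>j\<in>{1..<l}. c j)"
  proof (rule pair_bound_lower)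
    fix j assume j: "j \<in> {1..<l}"
    then have "1 \<le> j" "1 \<le> l - j" "j + (l - j) < m" using l by auto
    then have "c (j + (l - j)) \<le> c j + c (l - j)" by (rule kunzC_D(3)[OF c])
    moreover have "j + (l - j) = l" using j by auto
    ultimately show "4 \<le> c j + c (l - j)" using cl by simp
  qed
  moreover have "3 * (m - Suc l) \<le> 2 * (\<Sum>j\<in>{Suc l..<m}. c j)"
  proof (rule pair_bound_upper)
    fix j assume j: "j \<in> {Suc l..<m}"
    then have "j < m" "m + l - j < m" "m < j + (m + l - j)" using l by auto
    then have "c (j + (m + l - j) - m) \<le> c j + c (m + l - j) + 1"
      by (rule kunzC_D(4)[OF c])
    moreover have "j + (m + l - j) - m = l" using j by auto
    ultimately show "3 \<le> c j + c (m + l - j)" using cl by simp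
  qed
  moreover have "(\<Sum>i\<in>{1..<m}. c i) = (\<Sum>i\<in>{1..<l}. c i) + c l + (\<Sum>i\<in>{Suc l..<m}. c i)"
    by (rule sum_split3[OF l])
  moreover have "(\<Sum>i\<in>{1..<m}. c i) = g" by (rule kunzC_D(5)[OF c])
  ultimately show False using cl gm l mK by simp
qed



definition no113 :: "nat list \<Rightarrow> bool" where
  "no113 xs \<longleftrightarrow> (\<forall>i1\<in>{1..length xs}. \<forall>i2\<in>{1..length xs}. \<forall>i3\<in>{1..length xs}.
             i1 + i2 = i3 \<longrightarrow> (xs ! (i1 - 1), xs ! (i2 - 1), xs ! (i3 - 1)) \<noteq> (1, 1, 3))"

definition Yp :: "nat \<Rightarrow> nat \<Rightarrow> nat list set" where
  "Yp L K = {xs. length xs = L \<and> set xs \<subseteq> {1,2,3} \<and> no113 xs \<and> a_cnt xs + 2 * b_cnt xs \<le> K}"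

definition Fm :: "nat \<Rightarrow> (nat \<Rightarrow> nat) \<Rightarrow> nat list" where
  "Fm L c = map c [1..<Suc L]"

definition Gm :: "nat \<Rightarrow> nat \<Rightarrow> nat list \<Rightarrow> nat set \<Rightarrow> nat \<Rightarrow> nat" where
  "Gm L m xs T i = (if 1 \<le> i \<and> i \<le> L then xs ! (i - 1) else if L < i \<and> i < m then (if i \<in> T then 2 else 1) else 0)"

definition Hm :: "nat \<Rightarrow> nat \<Rightarrow> (nat \<Rightarrow> nat) \<Rightarrow> nat set" where
  "Hm L m c = {i \<in> {Suc L..<m}. c i = 2}"

lemma sum_list_123: "set xs \<subseteq> {1,2,3} \<Longrightarrow> sum_list xs = length xs + a_cnt xs + 2 * b_cnt xs"
  by (induction xs) (auto simp: a_cnt_def b_cnt_def)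

lemma Fm_nth: "1 \<le> i \<Longrightarrow> i \<le> L \<Longrightarrow> Fm L c ! (i - 1) = c i"
  unfolding Fm_def by (simp del: upt_Suc add: nth_upt)

lemma sum_Fm: "(\<Sum>i\<in>{1..<Suc L}. c i) = sum_list (Fm L c)"
proof -
  have "(\<Sum>i\<in>{1..<Suc L}. c i) = (\<Sum>i\<in>set [1..<Suc L]. c i)" by (simp only: set_upt)
  then show ?thesis unfolding Fm_def sum_set_upt_conv_sum_list_nat .
qed

lemma sum_12:
  assumes "finite A" "\<And>i. i \<in> A \<Longrightarrow> c i = 1 \<or> c i = (2::nat)"
  shows "sum c A = card A + card {i\<in>A. c i = 2}"
proof -
  have "sum c A = (\<Sum>i\<in>A. 1 + (if c i = 2 then 1 else 0))"
    using assms(2) by (intro sum.cong) auto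
  also have "\<dots> = (\<Sum>i\<in>A. 1) + (\<Sum>i\<in>A. if c i = 2 then 1 else 0)" by (rule sum.distrib)
  also have "(\<Sum>i\<in>A. (1::nat)) = card A" by simp
  also have "(\<Sum>i\<in>A. if c i = 2 then 1 else 0) = (\<Sum>i\<in>{i\<in>A. c i = 2}. (1::nat))"
    using sum.inter_filter[OF assms(1), of "\<lambda>_. (1::nat)" "\<lambda>i. c i = 2"] by simp
  finally show ?thesis by simp
qed

lemma sum_splitL: "L < (m::nat) \<Longrightarrow> (\<Sum>i\<in>{1..<m}. c i) = (\<Sum>i\<in>{1..<Suc L}. c i) + (\<Sum>i\<in>{Suc L..<m}. (c i :: nat))"
  by (intro sum.atLeastLessThan_concat[symmetric]) auto

lemma finite_Yp: "finite (Yp L K)"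
proof (rule finite_subset)
  show "Yp L K \<subseteq> {xs. set xs \<subseteq> {1,2,3} \<and> length xs = L}" unfolding Yp_def by auto
  show "finite {xs. set xs \<subseteq> {1,2,3::nat} \<and> length xs = L}" by (rule finite_lists_length_eq) simp
qed



lemma LM_lemma: "0 < m \<Longrightarrow> 3 * K \<le> m \<Longrightarrow> L = 2 * K - 1 \<Longrightarrow> L < (m::nat)"
  by (cases K) auto

lemma Fm_length[simp]: "length (Fm L c) = L"
  unfolding Fm_def by simp

lemma set_Fm: "set (Fm L c) = c ` {1..<Suc L}"
  unfolding Fm_def by (simp del: upt_Suc)

lemma F_in:
  assumes c: "c \<in> kunzC m g" and m0: "0 < m" and mK: "3 * K \<le> m" and gm: "g + 1 = m + K"
    and LK: "L = 2 * K - 1"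
  shows "Fm L c \<in> Yp L K"
proof -
  have LM: "L < m" by (rule LM_lemma[OF m0 mK LK])
  have bnd: "1 \<le> c i \<and> c i \<le> 3" if "1 \<le> i" "i \<le> L" for i
    using kunzC_D(2)[OF c, of i] bound3[OF c gm mK, of i] that LM by auto
  have set: "set (Fm L c) \<subseteq> {1,2,3}"
  proof
    fix x assume "x \<in> set (Fm L c)"
    then obtain i where "1 \<le> i" "i \<le> L" "x = c i" unfolding set_Fm by auto
    then show "x \<in> {1,2,3}" using bnd[of i] by auto
  qed
  have no: "no113 (Fm L c)"
    unfolding no113_def Fm_length
  proof (intro ballI impI)
    fix i1 i2 i3 assume h: "i1 \<in> {1..L}" "i2 \<in> {1..L}" "i3 \<in> {1..L}" "i1 + i2 = i3"
    then have "c (i1 + i2) \<le> c i1 + c i2" using kunzC_D(3)[OF c, of i1 i2] LM by auto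
    show "(Fm L c ! (i1 - 1), Fm L c ! (i2 - 1), Fm L c ! (i3 - 1)) \<noteq> (1, 1, 3)"
    proof -
      have "Fm L c ! (i1 - 1) = c i1" using h by (intro Fm_nth) auto
      moreover have "Fm L c ! (i2 - 1) = c i2" using h by (intro Fm_nth) auto
      moreover have "Fm L c ! (i3 - 1) = c i3" using h by (intro Fm_nth) auto
      ultimately
      show ?thesis using \<open>c (i1 + i2) \<le> c i1 + c i2\<close> h(4) by auto
    qed
  qed
  have s1: "sum_list (Fm L c) = L + a_cnt (Fm L c) + 2 * b_cnt (Fm L c)"
    using sum_list_123[OF set] by simp
  have s2: "(\<Sum>i\<in>{1..<m}. c i) = sum_list (Fm L c) + (\<Sum>i\<in>{Suc L..<m}. c i)"
    using sum_splitL[OF LM, of c] sum_Fm[of c L] by simp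
  have s3: "card {Suc L..<m} \<le> (\<Sum>i\<in>{Suc L..<m}. c i)"
    by (rule card_le_sum) (use kunzC_D(2)[OF c] in auto)
  have s4: "(\<Sum>i\<in>{1..<m}. c i) = g" by (rule kunzC_D(5)[OF c])
  have "a_cnt (Fm L c) + 2 * b_cnt (Fm L c) \<le> K"
    using s1 s2 s3 s4 gm LM by simp
  then show ?thesis unfolding Yp_def using set no by simp
qed

lemma Gm_low: "1 \<le> i \<Longrightarrow> i \<le> L \<Longrightarrow> Gm L m xs T i = xs ! (i - 1)"
  unfolding Gm_def by simp

lemma Gm_mid: "L < i \<Longrightarrow> i < m \<Longrightarrow> Gm L m xs T i = (if i \<in> T then 2 else 1)"
  unfolding Gm_def by simp

lemma Gm_out: "L < m \<Longrightarrow> i = 0 \<or> m \<le> i \<Longrightarrow> Gm L m xs T i = 0"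
  unfolding Gm_def by auto

lemma Fm_Gm: "length xs = L \<Longrightarrow> Fm L (Gm L m xs T) = xs"
proof (rule nth_equalityI)
  assume "length xs = L"
  then show "length (Fm L (Gm L m xs T)) = length xs" by simp
  fix n assume "n < length (Fm L (Gm L m xs T))"
  then have "1 \<le> Suc n" "Suc n \<le> L" by auto
  then show "Fm L (Gm L m xs T) ! n = xs ! n"
    using Fm_nth[of "Suc n" L] Gm_low[of "Suc n" L] by simp
qed



lemma Gm_in:
  assumes xs: "xs \<in> Yp L K" and T: "T \<subseteq> {Suc L..<m}" "card T = K - a_cnt xs - 2 * b_cnt xs"
    and LM: "L < m" and gm: "g + 1 = m + K"
  shows "Gm L m xs T \<in> kunzC m g"
proof -
  define d where "d = Gm L m xs T"
  have len: "length xs = L" and set: "set xs \<subseteq> {1,2,3}" and no: "no113 xs"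
    and ab: "a_cnt xs + 2 * b_cnt xs \<le> K" using xs unfolding Yp_def by auto
  have xsv: "1 \<le> xs ! (i - 1) \<and> xs ! (i - 1) \<le> 3" if "1 \<le> i" "i \<le> L" for i
  proof -
    have "xs ! (i - 1) \<in> set xs" using that len by (intro nth_mem) auto
    then show ?thesis using set by auto
  qed
  have d123: "1 \<le> d i \<and> d i \<le> 3" if "1 \<le> i" "i < m" for i
  proof (cases "i \<le> L")
    case True then show ?thesis using xsv[OF that(1) True] Gm_low[OF that(1) True] unfolding d_def by simp
  next
    case False then show ?thesis using Gm_mid[of L i m] that unfolding d_def by simp
  qed
  have d3: "i \<le> L" if "1 \<le> i" "i < m" "d i = 3" for i
  proof (rule ccontr)
    assume "\<not> i \<le> L"
    then show False using Gm_mid[of L i m xs T] that unfolding d_def by (auto split: if_splits)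
  qed
  have dz: "d i = 0" if "i = 0 \<or> m \<le> i" for i using Gm_out[OF LM that] unfolding d_def .
  have "d \<in> kunzC m g"
    unfolding kunzC_def
  proof (intro CollectI conjI allI impI)
    fix i assume "i = 0 \<or> m \<le> i" then show "d i = 0" by (rule dz)
  next
    fix i assume "1 \<le> i \<and> i < m" then show "1 \<le> d i" using d123 by auto
  next
    fix i j :: nat assume h: "1 \<le> i" "1 \<le> j" "i + j < m"
    have di: "1 \<le> d i" "1 \<le> d j" "d (i + j) \<le> 3" using d123[of i] d123[of j] d123[of "i+j"] h by auto
    show "d (i + j) \<le> d i + d j"
    proof (cases "d (i + j) = 3")
      case False then show ?thesis using di by linarith
    next
      case True
      then have ijL: "i + j \<le> L" using d3[of "i+j"] h by auto
      then have "i \<in> {1..length xs}" "j \<in> {1..length xs}" "i + j \<in> {1..length xs}" using h len by auto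
      then have "(xs ! (i - 1), xs ! (j - 1), xs ! (i + j - 1)) \<noteq> (1, 1, 3)"
        using no unfolding no113_def by blast
      moreover have "d i = xs ! (i - 1)" unfolding d_def using h ijL by (intro Gm_low) auto
      moreover have "d j = xs ! (j - 1)" unfolding d_def using h ijL by (intro Gm_low) auto
      moreover have "d (i + j) = xs ! (i + j - 1)" unfolding d_def using h ijL by (intro Gm_low) auto
      ultimately show ?thesis using True di by auto
    qed
  next
    fix i j :: nat assume h: "i < m" "j < m" "m < i + j"
    have "d (i + j - m) \<le> 3"
    proof (cases "i + j - m = 0")
      case True then show ?thesis using dz by simp
    next
      case False then show ?thesis using d123[of "i + j - m"] h by auto
    qed
    moreover have "1 \<le> d i" "1 \<le> d j" using d123[of i] d123[of j] h by auto
    ultimately show "d (i + j - m) \<le> d i + d j + 1" by linarith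
  next
    have e1: "(\<Sum>i\<in>{1..<m}. d i) = sum_list (Fm L d) + (\<Sum>i\<in>{Suc L..<m}. d i)"
      using sum_splitL[OF LM, of d] sum_Fm[of d L] by simp
    have e2: "Fm L d = xs" unfolding d_def by (rule Fm_Gm[OF len])
    have e3: "sum_list xs = L + a_cnt xs + 2 * b_cnt xs" using sum_list_123[OF set] len by simp
    have e4: "(\<Sum>i\<in>{Suc L..<m}. d i) = card {Suc L..<m} + card {i\<in>{Suc L..<m}. d i = 2}"
      by (rule sum_12) (auto simp: d_def Gm_mid)
    have e5: "{i\<in>{Suc L..<m}. d i = 2} = T"
      using T(1) by (auto simp: d_def Gm_mid split: if_splits)
    show "(\<Sum>i\<in>{1..<m}. d i) = g"
      unfolding e1 e2 e3 e4 e5 using T(2) ab gm LM by simp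
  qed
  then show ?thesis unfolding d_def .
qed

lemma bij_part:
  assumes xs: "xs \<in> Yp L K" and m0: "0 < m" and mK: "3 * K \<le> m" and gm: "g + 1 = m + K"
    and LK: "L = 2 * K - 1"
  shows "bij_betw (Hm L m) {c \<in> kunzC m g. Fm L c = xs}
           {T. T \<subseteq> {Suc L..<m} \<and> card T = K - a_cnt xs - 2 * b_cnt xs}"
proof (rule bij_betw_byWitness[where f' = "Gm L m xs"])
  have LM: "L < m" by (rule LM_lemma[OF m0 mK LK])
  have len: "length xs = L" and set: "set xs \<subseteq> {1,2,3}"
    and ab: "a_cnt xs + 2 * b_cnt xs \<le> K" using xs unfolding Yp_def by auto
  show "\<forall>c\<in>{c \<in> kunzC m g. Fm L c = xs}. Gm L m xs (Hm L m c) = c"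
  proof (intro ballI ext)
    fix c i assume "c \<in> {c \<in> kunzC m g. Fm L c = xs}"
    then have c: "c \<in> kunzC m g" and F: "Fm L c = xs" by auto
    consider "1 \<le> i \<and> i \<le> L" | "L < i \<and> i < m" | "i = 0 \<or> m \<le> i" by linarith
    then show "Gm L m xs (Hm L m c) i = c i"
    proof cases
      case 1
      then show ?thesis using Gm_low[of i L m xs] Fm_nth[of i L c] F by simp
    next
      case 2
      have "2 * K \<le> i" using 2 LK by linarith
      then have "c i \<le> 2" using bound2[OF c gm] 2 by simp
      moreover have "1 \<le> c i" using kunzC_D(2)[OF c, of i] 2 by simp
      ultimately show ?thesis using Gm_mid[of L i m] 2 unfolding Hm_def by auto
    next
      case 3
      then show ?thesis using Gm_out[OF LM 3] kunzC_D(1)[OF c 3] by simp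
    qed
  qed
  show "\<forall>T\<in>{T. T \<subseteq> {Suc L..<m} \<and> card T = K - a_cnt xs - 2 * b_cnt xs}. Hm L m (Gm L m xs T) = T"
    by (auto simp: Hm_def Gm_mid split: if_splits)
  show "Hm L m ` {c \<in> kunzC m g. Fm L c = xs} \<subseteq> {T. T \<subseteq> {Suc L..<m} \<and> card T = K - a_cnt xs - 2 * b_cnt xs}"
  proof
    fix T assume "T \<in> Hm L m ` {c \<in> kunzC m g. Fm L c = xs}"
    then obtain c where c: "c \<in> kunzC m g" and F: "Fm L c = xs" and Tc: "T = Hm L m c" by auto
    have e1: "(\<Sum>i\<in>{1..<m}. c i) = sum_list (Fm L c) + (\<Sum>i\<in>{Suc L..<m}. c i)"
      using sum_splitL[OF LM, of c] sum_Fm[of c L] by simp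
    have e3: "sum_list xs = L + a_cnt xs + 2 * b_cnt xs" using sum_list_123[OF set] len by simp
    have c12: "c i = 1 \<or> c i = 2" if "i \<in> {Suc L..<m}" for i
    proof -
      have "2 * K \<le> i" "1 \<le> i" "i < m" using that LK by auto
      then show ?thesis using bound2[OF c gm, of i] kunzC_D(2)[OF c, of i] by auto
    qed
    have e4: "(\<Sum>i\<in>{Suc L..<m}. c i) = card {Suc L..<m} + card (Hm L m c)"
      unfolding Hm_def by (rule sum_12) (use c12 in auto)
    have "(\<Sum>i\<in>{1..<m}. c i) = g" by (rule kunzC_D(5)[OF c])
    then have "card T = K - a_cnt xs - 2 * b_cnt xs"
      using e1 e3 e4 F Tc gm LM by simp
    moreover have "T \<subseteq> {Suc L..<m}" unfolding Tc Hm_def by auto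
    ultimately show "T \<in> {T. T \<subseteq> {Suc L..<m} \<and> card T = K - a_cnt xs - 2 * b_cnt xs}" by simp
  qed
  show "Gm L m xs ` {T. T \<subseteq> {Suc L..<m} \<and> card T = K - a_cnt xs - 2 * b_cnt xs} \<subseteq> {c \<in> kunzC m g. Fm L c = xs}"
  proof
    fix c assume "c \<in> Gm L m xs ` {T. T \<subseteq> {Suc L..<m} \<and> card T = K - a_cnt xs - 2 * b_cnt xs}"
    then obtain T where T: "T \<subseteq> {Suc L..<m}" "card T = K - a_cnt xs - 2 * b_cnt xs" and cT: "c = Gm L m xs T"
      by auto
    have "c \<in> kunzC m g" unfolding cT by (rule Gm_in[OF xs T LM gm])
    moreover have "Fm L c = xs" unfolding cT by (rule Fm_Gm[OF len])
    ultimately show "c \<in> {c \<in> kunzC m g. Fm L c = xs}" by simp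
  qed
qed

lemma card_kunzC:
  assumes m0: "0 < m" and mK: "3 * K \<le> m" and gm: "g + 1 = m + K" and LK: "L = 2 * K - 1"
  shows "card (kunzC m g) = (\<Sum>xs\<in>Yp L K. (m - Suc L) choose (K - a_cnt xs - 2 * b_cnt xs))"
proof -
  define A where "A xs = {c \<in> kunzC m g. Fm L c = xs}" for xs
  have U: "kunzC m g = (\<Union>xs\<in>Yp L K. A xs)"
    unfolding A_def using F_in[OF _ m0 mK gm LK] by auto
  have cardA: "card (A xs) = (m - Suc L) choose (K - a_cnt xs - 2 * b_cnt xs)" 
    and finA: "finite (A xs)" if "xs \<in> Yp L K" for xs
  proof -
    have b: "bij_betw (Hm L m) (A xs) {T. T \<subseteq> {Suc L..<m} \<and> card T = K - a_cnt xs - 2 * b_cnt xs}"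
      unfolding A_def by (rule bij_part[OF that m0 mK gm LK])
    have "card (A xs) = card {T. T \<subseteq> {Suc L..<m} \<and> card T = K - a_cnt xs - 2 * b_cnt xs}"
      by (rule bij_betw_same_card[OF b])
    also have "\<dots> = card {Suc L..<m} choose (K - a_cnt xs - 2 * b_cnt xs)"
      by (rule n_subsets) simp
    finally show "card (A xs) = (m - Suc L) choose (K - a_cnt xs - 2 * b_cnt xs)" by simp
    have "finite {T. T \<subseteq> {Suc L..<m} \<and> card T = K - a_cnt xs - 2 * b_cnt xs}" by simp
    then show "finite (A xs)" using bij_betw_finite[OF b] by simp
  qed
  have "card (kunzC m g) = (\<Sum>xs\<in>Yp L K. card (A xs))"
    unfolding U
  proof (rule card_UN_disjoint)
    show "finite (Yp L K)" by (rule finite_Yp)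
    show "\<forall>i\<in>Yp L K. finite (A i)" using finA by blast
    show "\<forall>i\<in>Yp L K. \<forall>j\<in>Yp L K. i \<noteq> j \<longrightarrow> A i \<inter> A j = {}" unfolding A_def by auto
  qed
  also have "\<dots> = (\<Sum>xs\<in>Yp L K. (m - Suc L) choose (K - a_cnt xs - 2 * b_cnt xs))"
    by (rule sum.cong) (simp_all add: cardA)
  finally show ?thesis .
qed



theorem theorem8p9:
  fixes k :: int and g :: nat
  assumes "k \<ge> -1" and "int g \<ge> 4 * k + 3"
  shows "card {S \<in> semigroups_of_genus g. int (multiplicity_ns S) = int g - k} =
         (\<Sum>xs\<in>Y_set k. nat (int g - 3 * k - 2) choose
                          nat (k + 1 - int (a_cnt xs) - 2 * int (b_cnt xs)))"
proof -
  define K where "K = nat (k + 1)"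
  define m where "m = g + 1 - K"
  define L where "L = 2 * K - 1"
  have Kk: "int K = k + 1" unfolding K_def using assms(1) by simp
  have gK: "4 * K \<le> g + 1" using assms(2) Kk by linarith
  have m0: "0 < m" and mK: "3 * K \<le> m" and gm: "g + 1 = m + K" unfolding m_def using gK by auto
  have mint: "int m = int g - k" unfolding m_def using gK Kk by linarith
  have setEq: "{S \<in> semigroups_of_genus g. int (multiplicity_ns S) = int g - k}
      = {S \<in> semigroups_of_genus g. multiplicity_ns S = m}"
    using mint by (metis (no_types, lifting) of_nat_eq_iff)
  have "card {S \<in> semigroups_of_genus g. int (multiplicity_ns S) = int g - k}
      = (\<Sum>xs\<in>Yp L K. (m - Suc L) choose (K - a_cnt xs - 2 * b_cnt xs))"
    unfolding setEq card_part1[OF m0] by (rule card_kunzC[OF m0 mK gm L_def])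
  also have "\<dots> = (\<Sum>xs\<in>Y_set k. nat (int g - 3 * k - 2) choose
                          nat (k + 1 - int (a_cnt xs) - 2 * int (b_cnt xs)))"
  proof (cases "k = -1")
    case True
    then have K0: "K = 0" "L = 0" unfolding K_def L_def by auto
    have Y1: "Y_set k = {[]}" unfolding Y_set_def using True by simp
    have Y2: "Yp L K = {[]}" unfolding Yp_def K0 by (auto simp: no113_def a_cnt_def b_cnt_def)
    show ?thesis unfolding Y1 Y2 using True by (simp add: a_cnt_def b_cnt_def K0)
  next
    case False
    then have k0: "k \<ge> 0" using assms(1) by simp
    have LK: "int L = 2 * k + 1" unfolding L_def using Kk k0 by linarith
    have Yeq: "Y_set k = Yp L K"
      unfolding Y_set_def Yp_def no113_def using False LK Kk
      by (intro set_eqI) (auto simp del: of_nat_add simp add: of_nat_add[symmetric])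
    show ?thesis unfolding Yeq
    proof (rule sum.cong)
      fix xs assume xs: "xs \<in> Yp L K"
      then have ab: "a_cnt xs + 2 * b_cnt xs \<le> K" unfolding Yp_def by simp
      have "nat (int g - 3 * k - 2) = m - Suc L" unfolding m_def L_def using Kk gK k0 by linarith
      moreover have "nat (k + 1 - int (a_cnt xs) - 2 * int (b_cnt xs)) = K - a_cnt xs - 2 * b_cnt xs"
        using ab Kk by linarith
      ultimately show "(m - Suc L) choose (K - a_cnt xs - 2 * b_cnt xs) =
          nat (int g - 3 * k - 2) choose nat (k + 1 - int (a_cnt xs) - 2 * int (b_cnt xs))" by simp
    qed simp
  qed
  finally show ?thesis .
qed


end
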